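(* Let $k\ge3$ and let $\pi\in\mathcal{S}_n$ be a Schröder permutation. Then $\pi$ avoids the pattern $2\,1\,3\,4\cdots k$ if and only if every element $(i,j)\in\mathcal{E}(\pi)$ satisfies $i+j\ge n+3-k+\rho(i,j)$.
   Context: A permutation avoids $\tau\in\mathcal{S}_k$ if no subsequence of length $k$ is in the same relative order as $\tau$. A Schröder permutation is one avoiding both $1243$ and $2143$. Represent $\pi\in\mathcal{S}_n$ by an $n\times n$ array, rows $i$ numbered top to bottom, columns $j$ left to right, with a dot in square $(i,\pi_i)$. The diagram $D(\pi)$ is the set of squares $(i,j)$ with $\pi_i>j$ and $\pi^{-1}(j)>i$. The essential set $\mathcal{E}(\pi)$ is the set of $(i,j)\in D(\pi)$ with $(i+1,j)\notin D(\pi)$ and $(i,j+1)\notin D(\pi)$ (squares outside the array count as not in $D(\pi)$). The rank of $(i,j)$ is $\rho(i,j)=\#\{k'<i:\pi_{k'}<j\}$. *)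

theory Defs
  imports "HOL-Combinatorics.Permutations"
begin

text \<open>Permutations of [n] are functions nat => nat that permute {1..n}.
  A pattern tau in S_k is given as the list [tau_1, ..., tau_k].\<close>

definition contains :: "(nat \<Rightarrow> nat) \<Rightarrow> nat \<Rightarrow> nat list \<Rightarrow> bool" where
  "contains \<pi> n \<tau> \<longleftrightarrow> (\<exists>idx :: nat \<Rightarrow> nat.
      strict_mono_on {0..<length \<tau>} idx \<and>
      (\<forall>a<length \<tau>. idx a \<in> {1..n}) \<and>
      (\<forall>a<length \<tau>. \<forall>b<length \<tau>. \<pi> (idx a) < \<pi> (idx b) \<longleftrightarrow> \<tau> ! a < \<tau> ! b))"

definition avoids :: "(nat \<Rightarrow> nat) \<Rightarrow> nat \<Rightarrow> nat list \<Rightarrow> bool" where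
  "avoids \<pi> n \<tau> \<longleftrightarrow> \<not> contains \<pi> n \<tau>"

definition schroeder :: "(nat \<Rightarrow> nat) \<Rightarrow> nat \<Rightarrow> bool" where
  "schroeder \<pi> n \<longleftrightarrow> \<pi> permutes {1..n} \<and> avoids \<pi> n [1,2,4,3] \<and> avoids \<pi> n [2,1,4,3]"

definition diagram :: "(nat \<Rightarrow> nat) \<Rightarrow> nat \<Rightarrow> (nat \<times> nat) set" where
  "diagram \<pi> n = {(i,j). i \<in> {1..n} \<and> j \<in> {1..n} \<and> \<pi> i > j \<and> inv \<pi> j > i}"

definition essential_set :: "(nat \<Rightarrow> nat) \<Rightarrow> nat \<Rightarrow> (nat \<times> nat) set" where
  "essential_set \<pi> n = {(i,j). (i,j) \<in> diagram \<pi> n \<and> (i+1,j) \<notin> diagram \<pi> n \<and> (i,j+1) \<notin> diagram \<pi> n}"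

definition rank :: "(nat \<Rightarrow> nat) \<Rightarrow> nat \<Rightarrow> nat \<Rightarrow> nat" where
  "rank \<pi> i j = card {k'. 1 \<le> k' \<and> k' < i \<and> \<pi> k' < j}"

definition pat21 :: "nat \<Rightarrow> nat list" where
  "pat21 k = 2 # 1 # [3..<k+1]"

end

theory Submission imports Defs begin

lemma contains_I:
  assumes "length xs = length \<tau>" "sorted_wrt (<) xs" "set xs \<subseteq> {1..n}"
    "\<forall>a<length \<tau>. \<forall>b<length \<tau>. \<pi> (xs!a) < \<pi> (xs!b) \<longleftrightarrow> \<tau>!a < \<tau>!b"
  shows "contains \<pi> n \<tau>"
  unfolding contains_def
proof (intro exI[of _ "\<lambda>m. xs!m"] conjI)
  show "strict_mono_on {0..<length \<tau>} ((!) xs)"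
    unfolding strict_mono_on_def using assms(1,2) sorted_wrt_nth_less by fastforce
  show "\<forall>a<length \<tau>. xs ! a \<in> {1..n}" using assms(1,3) nth_mem by (metis subsetD)
  show "\<forall>a<length \<tau>. \<forall>b<length \<tau>. \<pi> (xs!a) < \<pi> (xs!b) \<longleftrightarrow> \<tau>!a < \<tau>!b" by (rule assms(4))
qed

lemma iso_from_mono:
  fixes f :: "nat \<Rightarrow> nat" and \<tau> :: "nat list"
  assumes "distinct \<tau>" "\<forall>a<length \<tau>. \<forall>b<length \<tau>. \<tau>!a < \<tau>!b \<longrightarrow> f a < f b"
  shows "\<forall>a<length \<tau>. \<forall>b<length \<tau>. f a < f b \<longleftrightarrow> \<tau>!a < \<tau>!b"
proof (intro allI impI)
  fix a b assume ab: "a < length \<tau>" "b < length \<tau>"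
  show "f a < f b \<longleftrightarrow> \<tau>!a < \<tau>!b"
  proof
    assume h: "f a < f b"
    show "\<tau>!a < \<tau>!b"
    proof (rule ccontr)
      assume "\<not> \<tau>!a < \<tau>!b"
      then consider "\<tau>!a = \<tau>!b" | "\<tau>!b < \<tau>!a" by linarith
      then show False
      proof cases
        case 1 then have "a = b" using assms(1) ab nth_eq_iff_index_eq by blast
        then show False using h by simp
      next
        case 2 then have "f b < f a" using assms(2) ab by blast
        then show False using h by simp
      qed
    qed
  next
    assume "\<tau>!a < \<tau>!b" then show "f a < f b" using assms(2) ab by blast
  qed
qed


lemma pat21_len: "length (pat21 k) = k" if "k \<ge> 2" using that by (simp add: pat21_def del: upt_Suc)

lemma pat21_nth: "m < k \<Longrightarrow> k \<ge> 2 \<Longrightarrow> pat21 k ! m = (if m = 0 then 2 else if m = 1 then 1 else m + 1)"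
  by (cases m; cases "m - 1") (auto simp: pat21_def nth_Cons' nth_upt simp del: upt_Suc)

lemma pat21_distinct: "distinct (pat21 k)" by (simp add: pat21_def)

lemma less4: "(a::nat) < 4 \<Longrightarrow> a = 0 \<or> a = 1 \<or> a = 2 \<or> a = 3" by arith

lemma schr_inc:
  assumes perm: "\<pi> permutes {1..n}" and av: "avoids \<pi> n [2,1,4,3]"
    and "1 \<le> x" "x < y" "\<pi> y < \<pi> x" "y < q1" "q1 < q2" "q2 \<le> n" "\<pi> x < \<pi> q1" "\<pi> x < \<pi> q2"
  shows "\<pi> q1 < \<pi> q2"
proof (rule ccontr)
  assume "\<not> \<pi> q1 < \<pi> q2"
  moreover have "\<pi> q1 \<noteq> \<pi> q2" using permutes_inj[OF perm] assms(7) by (metis injD less_irrefl)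
  ultimately have lt: "\<pi> q2 < \<pi> q1" by linarith
  have "contains \<pi> n [2,1,4,3]"
  proof (rule contains_I[of "[x,y,q1,q2]"])
    have "\<forall>a<4. \<forall>b<4. [2,1,4,3::nat]!a < [2,1,4,3::nat]!b \<longrightarrow> \<pi> ([x,y,q1,q2]!a) < \<pi> ([x,y,q1,q2]!b)"
    proof (intro allI impI)
      fix a b :: nat assume "a < 4" "b < 4" and h: "[2,1,4,3::nat]!a < [2,1,4,3::nat]!b"
      from less4[OF \<open>a < 4\<close>] less4[OF \<open>b < 4\<close>] h
      show "\<pi> ([x,y,q1,q2]!a) < \<pi> ([x,y,q1,q2]!b)"
        using assms lt by (elim disjE) simp_all
    qed
    then show "\<forall>a<length [2,1,4,3::nat]. \<forall>b<length [2,1,4,3::nat]. \<pi> ([x,y,q1,q2]!a) < \<pi> ([x,y,q1,q2]!b) \<longleftrightarrow> [2,1,4,3::nat]!a < [2,1,4,3::nat]!b"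
      by (intro iso_from_mono[where f="\<lambda>m. \<pi> ([x,y,q1,q2]!m)"]) simp_all
    show "set [x, y, q1, q2] \<subseteq> {1..n}" using assms by auto
    show "sorted_wrt (<) [x, y, q1, q2]" using assms by auto
  qed simp
  then show False using av by (simp add: avoids_def)
qed


definition se :: "(nat \<Rightarrow> nat) \<Rightarrow> nat \<Rightarrow> nat \<Rightarrow> nat \<Rightarrow> nat set" where
  "se \<pi> n i j = {q. i < q \<and> q \<le> n \<and> j < \<pi> q}"

lemma perm_facts:
  assumes perm: "\<pi> permutes {1..n}"
  shows "\<pi> (inv \<pi> v) = v" "inv \<pi> (\<pi> q) = q"
    "v \<in> {1..n} \<Longrightarrow> inv \<pi> v \<in> {1..n}" "q \<in> {1..n} \<Longrightarrow> \<pi> q \<in> {1..n}"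
  using permutes_inverses[OF perm] permutes_in_image[OF perm] permutes_in_image[OF permutes_inv[OF perm]]
  by auto

lemma count_se:
  assumes perm: "\<pi> permutes {1..n}" and D: "(i,j) \<in> diagram \<pi> n"
  shows "card (se \<pi> n i j) + i + j = n + rank \<pi> i j"
proof -
  from D have hi: "1 \<le> i" "i \<le> n" "1 \<le> j" "j \<le> n" "j < \<pi> i" "i < inv \<pi> j"
    by (auto simp: diagram_def)
  note pf = perm_facts[OF perm]
  define \<beta> where "\<beta> = inv \<pi> j"
  have pb: "\<pi> \<beta> = j" using pf by (simp add: \<beta>_def)
  have bn: "\<beta> \<le> n" using pf(3)[of j] hi by (auto simp: \<beta>_def)
  have ib: "i < \<beta>" using hi by (simp add: \<beta>_def)
  define A where "A = {q. i < q \<and> q \<le> n \<and> \<pi> q < j}"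
  define R where "R = {k'. 1 \<le> k' \<and> k' < i \<and> \<pi> k' < j}"
  define P where "P = {q \<in> {1..n}. \<pi> q < j}"
  have PRA: "P = R \<union> A"
  proof
    show "P \<subseteq> R \<union> A"
    proof
      fix q assume "q \<in> P"
      then have q: "1 \<le> q" "q \<le> n" "\<pi> q < j" by (auto simp: P_def)
      then have "q \<noteq> i" using hi by auto
      then show "q \<in> R \<union> A" using q by (auto simp: R_def A_def)
    qed
    show "R \<union> A \<subseteq> P" using hi by (auto simp: R_def A_def P_def)
  qed
  have RA: "R \<inter> A = {}" by (auto simp: R_def A_def)
  have fR: "finite R" by (rule finite_subset[of _ "{..<i}"]) (auto simp: R_def)
  have fA: "finite A" by (rule finite_subset[of _ "{..n}"]) (auto simp: A_def)
  have img: "\<pi> ` P = {1..<j}"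
  proof
    show "\<pi> ` P \<subseteq> {1..<j}" using pf(4) by (force simp: P_def)
    show "{1..<j} \<subseteq> \<pi> ` P"
    proof
      fix v assume v: "v \<in> {1..<j}"
      then have "inv \<pi> v \<in> {1..n}" using pf(3) hi by auto
      moreover have "\<pi> (inv \<pi> v) = v" using pf(1) .
      ultimately show "v \<in> \<pi> ` P" using v unfolding P_def by (metis (mono_tags, lifting) atLeastLessThan_iff image_eqI mem_Collect_eq)
    qed
  qed
  have "card P = j - 1"
  proof -
    have "card P = card (\<pi> ` P)" using permutes_inj[OF perm] by (simp add: card_image inj_on_subset)
    then show ?thesis using img by simp
  qed
  then have c1: "card R + card A = j - 1" using PRA RA fR fA by (simp add: card_Un_disjoint)
  define B where "B = se \<pi> n i j"
  have fB: "finite B" by (rule finite_subset[of _ "{..n}"]) (auto simp: B_def se_def)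
  have split: "{i<..n} = A \<union> insert \<beta> B"
  proof
    show "{i<..n} \<subseteq> A \<union> insert \<beta> B"
    proof
      fix q assume q: "q \<in> {i<..n}"
      have "\<pi> q \<noteq> j \<or> q = \<beta>" using pf(2) pb by metis
      then show "q \<in> A \<union> insert \<beta> B" using q by (auto simp: A_def B_def se_def)
    qed
    show "A \<union> insert \<beta> B \<subseteq> {i<..n}" using ib bn by (auto simp: A_def B_def se_def)
  qed
  have "\<beta> \<notin> B" "\<beta> \<notin> A" using pb by (auto simp: A_def B_def se_def)
  moreover have "A \<inter> B = {}" by (auto simp: A_def B_def se_def)
  ultimately have "card {i<..n} = card A + 1 + card B"
    using split fA fB by (simp add: card_Un_disjoint)
  then have c2: "n - i = card A + 1 + card B" by simp
  have "rank \<pi> i j = card R" by (simp add: rank_def R_def)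
  then show ?thesis using c1 c2 hi unfolding B_def by linarith
qed


lemma ess_to_contains:
  assumes perm: "\<pi> permutes {1..n}" and av: "avoids \<pi> n [2,1,4,3]" and k: "k \<ge> 3"
    and E: "(i,j) \<in> essential_set \<pi> n" and cs: "card (se \<pi> n i j) \<ge> k - 2"
  shows "contains \<pi> n (pat21 k)"
proof -
  note pf = perm_facts[OF perm]
  from E have hi: "1 \<le> i" "i \<le> n" "1 \<le> j" "j \<le> n" "j < \<pi> i" "i < inv \<pi> j"
    and nD1: "(i+1,j) \<notin> diagram \<pi> n" and nD2: "(i,j+1) \<notin> diagram \<pi> n"
    by (auto simp: essential_set_def diagram_def)
  have pin: "\<pi> i \<le> n" using pf(4)[of i] hi by auto
  have j1: "j + 1 \<le> n" using hi pin by linarith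
  define x where "x = inv \<pi> (j+1)"
  have px: "\<pi> x = j + 1" using pf(1) by (simp add: x_def)
  have x1: "1 \<le> x" "x \<le> n" using pf(3)[of "j+1"] j1 by (auto simp: x_def)
  have xi: "x \<le> i"
  proof (cases "\<pi> i = j + 1")
    case True then show ?thesis using pf(2)[of i] by (simp add: x_def)
  next
    case False
    then have "j + 1 < \<pi> i" using hi by linarith
    then show ?thesis using nD2 hi j1 unfolding diagram_def x_def by auto
  qed
  have bn: "inv \<pi> j \<le> n" using pf(3)[of j] hi by auto
  have i1n: "i + 1 \<le> n" using hi bn by linarith
  have py: "\<pi> (i+1) \<le> j"
  proof (rule ccontr)
    assume "\<not> \<pi> (i+1) \<le> j"
    then have g: "j < \<pi> (i+1)" by simp
    then have "\<not> i + 1 < inv \<pi> j" using nD1 hi i1n unfolding diagram_def by auto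
    then have "inv \<pi> j = i + 1" using hi by linarith
    then have "\<pi> (i+1) = j" using pf(1)[of j] by simp
    then show False using g by simp
  qed
  define T where "T = {q. i+1 < q \<and> q \<le> n \<and> j+1 < \<pi> q}"
  have ST: "se \<pi> n i j \<subseteq> T"
  proof
    fix q assume "q \<in> se \<pi> n i j"
    then have q: "i < q" "q \<le> n" "j < \<pi> q" by (auto simp: se_def)
    have "q \<noteq> i + 1" using q py by auto
    moreover have "\<pi> q \<noteq> j + 1"
    proof
      assume "\<pi> q = j + 1"
      then have "q = x" using pf(2)[of q] by (simp add: x_def)
      then show False using q xi by simp
    qed
    ultimately show "q \<in> T" using q by (auto simp: T_def)
  qed
  have fT: "finite T" by (rule finite_subset[of _ "{..n}"]) (auto simp: T_def)
  have cT: "card T \<ge> k - 2" using cs card_mono[OF fT ST] by linarith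
  define l where "l = sorted_list_of_set T"
  have l: "sorted_wrt (<) l" "set l = T" "length l = card T"
    using fT by (auto simp: l_def)
  define l' where "l' = take (k-2) l"
  have l': "sorted_wrt (<) l'" "set l' \<subseteq> T" "length l' = k - 2"
    using l cT set_take_subset[of "k-2" l] by (auto simp: l'_def)
  define xs where "xs = x # (i+1) # l'"
  have len: "length xs = length (pat21 k)" using l' k by (simp add: xs_def pat21_len)
  have lT: "l' ! m \<in> T" if "m < k - 2" for m
    using nth_mem[of m l'] l'(2,3) that by auto
  have xsm: "xs ! m = l' ! (m - 2)" if "m \<ge> 2" for m
  proof -
    have "m = Suc (Suc (m - 2))" using that by simp
    then have "xs ! m = (x # (i+1) # l') ! Suc (Suc (m - 2))" unfolding xs_def by metis
    then show ?thesis by simp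
  qed
  show ?thesis
  proof (rule contains_I[OF len])
    have lt: "\<forall>q\<in>set l'. i+1 < q \<and> q \<le> n" using l'(2) unfolding T_def by blast
    have "x < i + 1" using xi by simp
    then show "sorted_wrt (<) xs" unfolding xs_def using lt l'(1)
      by (simp only: sorted_wrt.simps) (auto intro: less_trans)
    show "set xs \<subseteq> {1..n}" unfolding xs_def using lt x1 i1n by fastforce
    have "\<forall>a<length (pat21 k). \<forall>b<length (pat21 k). pat21 k ! a < pat21 k ! b \<longrightarrow> \<pi> (xs!a) < \<pi> (xs!b)"
    proof (intro allI impI)
      fix a b assume a: "a < length (pat21 k)" and b: "b < length (pat21 k)" and h: "pat21 k ! a < pat21 k ! b"
      have ak: "a < k" and bk: "b < k" using a b k by (auto simp: pat21_len)
      have h': "(if a = 0 then 2 else if a = 1 then 1 else a + 1) < (if b = 0 then 2 else if b = 1 then 1 else (b + 1::nat))"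
        using h pat21_nth[OF ak] pat21_nth[OF bk] k by simp
      consider "a = 0" "b \<ge> 2" | "a = 1" "b = 0" | "a = 1" "b \<ge> 2" | "a \<ge> 2" "b \<ge> 2" "a < b"
        using h' by (auto split: if_splits)
      then show "\<pi> (xs!a) < \<pi> (xs!b)"
      proof cases
        case 1
        have "l' ! (b-2) \<in> T" using lT bk 1 by simp
        then show ?thesis using 1 xsm px by (simp add: xs_def T_def)
      next
        case 2 then show ?thesis using py px by (simp add: xs_def)
      next
        case 3
        have "l' ! (b-2) \<in> T" using lT bk 3 by simp
        then show ?thesis using 3 xsm py by (simp add: xs_def T_def)
      next
        case 4
        have q1: "l' ! (a-2) \<in> T" using lT ak 4 by simp
        have q2: "l' ! (b-2) \<in> T" using lT bk 4 by simp
        have lt: "l' ! (a-2) < l' ! (b-2)"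
          using sorted_wrt_nth_less[OF l'(1), of "a-2" "b-2"] 4 bk l'(3) by simp
        have "\<pi> (l' ! (a-2)) < \<pi> (l' ! (b-2))"
          using schr_inc[OF perm av x1(1), of "i+1" "l' ! (a-2)" "l' ! (b-2)"] q1 q2 lt xi py px
          unfolding T_def by simp
        then show ?thesis using xsm 4 by simp
      qed
    qed
    then show "\<forall>a<length (pat21 k). \<forall>b<length (pat21 k). \<pi> (xs!a) < \<pi> (xs!b) \<longleftrightarrow> pat21 k!a < pat21 k!b"
      by (intro iso_from_mono[where f="\<lambda>m. \<pi> (xs!m)"] pat21_distinct)
  qed
qed


lemma contains_to_ess:
  assumes perm: "\<pi> permutes {1..n}" and k: "k \<ge> 3" and C: "contains \<pi> n (pat21 k)"
  shows "\<exists>(i,j)\<in>essential_set \<pi> n. card (se \<pi> n i j) \<ge> k - 2"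
proof -
  note pf = perm_facts[OF perm]
  have lenk: "length (pat21 k) = k" using k by (simp add: pat21_len)
  from C obtain idx where sm: "strict_mono_on {0..<k} idx" and inn: "\<forall>a<k. idx a \<in> {1..n}"
    and iso: "\<forall>a<k. \<forall>b<k. \<pi> (idx a) < \<pi> (idx b) \<longleftrightarrow> pat21 k ! a < pat21 k ! b"
    unfolding contains_def lenk by blast
  have k2: "k \<ge> 2" using k by simp
  define a where "a = idx 0"
  define b where "b = idx 1"
  have ab: "a < b" using sm k unfolding a_def b_def strict_mono_on_def by auto
  have a1: "1 \<le> a" using inn k by (auto simp: a_def)
  have bn: "b \<le> n" using inn k by (auto simp: b_def)
  have pba: "\<pi> b < \<pi> a" using iso k pat21_nth[of 1 k] pat21_nth[of 0 k] by (auto simp: a_def b_def)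
  have cm: "b < idx m \<and> idx m \<le> n \<and> \<pi> a < \<pi> (idx m)" if m: "2 \<le> m" "m < k" for m
  proof -
    have "b < idx m" using sm m unfolding b_def strict_mono_on_def by auto
    moreover have "idx m \<le> n" using inn m by auto
    moreover have "\<pi> a < \<pi> (idx m)" using iso m pat21_nth[of m k] pat21_nth[of 0 k] k by (auto simp: a_def)
    ultimately show ?thesis by simp
  qed
  define b' where "b' = (LEAST t. a < t \<and> \<pi> t < \<pi> a)"
  have b'1: "a < b' \<and> \<pi> b' < \<pi> a" unfolding b'_def by (rule LeastI[of _ b]) (use ab pba in simp)
  have b'b: "b' \<le> b" unfolding b'_def by (rule Least_le) (use ab pba in simp)
  have b'min: "\<not> \<pi> t < \<pi> a" if "a < t" "t < b'" for t
    using not_less_Least[of t "\<lambda>t. a < t \<and> \<pi> t < \<pi> a"] that unfolding b'_def by blast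
  define i where "i = b' - 1"
  have ib': "i + 1 = b'" "a \<le> i" using b'1 by (auto simp: i_def)
  have pai: "\<pi> a \<le> \<pi> i"
  proof (cases "i = a")
    case False then have "a < i" "i < b'" using ib' by auto
    then show ?thesis using b'min by (meson not_less)
  qed simp
  have inn': "i \<in> {1..n}" using a1 ib' b'b bn by auto
  have b'n: "b' \<in> {1..n}" using b'b bn b'1 a1 by auto
  define v where "v = (LEAST w. w \<in> \<pi> ` {1..i} \<and> \<pi> b' < w)"
  have wa: "\<pi> a \<in> \<pi> ` {1..i} \<and> \<pi> b' < \<pi> a" using a1 ib' b'1 by auto
  have v1: "v \<in> \<pi> ` {1..i} \<and> \<pi> b' < v" unfolding v_def by (rule LeastI[of _ "\<pi> a"]) (rule wa)
  have va: "v \<le> \<pi> a" unfolding v_def by (rule Least_le) (rule wa)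
  have vmin: "\<not> (w \<in> \<pi> ` {1..i} \<and> \<pi> b' < w)" if "w < v" for w
    using not_less_Least[of w "\<lambda>w. w \<in> \<pi> ` {1..i} \<and> \<pi> b' < w"] that unfolding v_def by blast
  define j where "j = v - 1"
  have pb'1: "1 \<le> \<pi> b'" using pf(4)[OF b'n] by auto
  have jv: "j + 1 = v" "\<pi> b' \<le> j" using v1 by (auto simp: j_def)
  have pan: "\<pi> a \<le> n" using pf(4)[of a] a1 ib' inn' by auto
  have jn: "j \<in> {1..n}" using jv pb'1 va pan by auto
  have D: "(i,j) \<in> diagram \<pi> n"
  proof -
    have "j < \<pi> i" using jv va pai by linarith
    moreover have "i < inv \<pi> j"
    proof (cases "j = \<pi> b'")
      case True then show ?thesis using pf(2)[of b'] ib' by simp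
    next
      case False
      then have lt: "\<pi> b' < j" using jv by simp
      show ?thesis
      proof (rule ccontr)
        assume "\<not> i < inv \<pi> j"
        moreover have "1 \<le> inv \<pi> j" using pf(3)[OF jn] by auto
        ultimately have "j \<in> \<pi> ` {1..i}" using pf(1)[of j] by (metis atLeastAtMost_iff image_eqI not_less)
        then show False using vmin[of j] lt jv by simp
      qed
    qed
    ultimately show ?thesis using inn' jn by (simp add: diagram_def)
  qed
  have nD1: "(i+1,j) \<notin> diagram \<pi> n" using ib' jv by (simp add: diagram_def)
  have nD2: "(i,j+1) \<notin> diagram \<pi> n"
  proof -
    obtain w where w: "w \<in> {1..i}" "\<pi> w = v" using v1 by auto
    then have "inv \<pi> (j+1) = w" using pf(2)[of w] jv by simp
    then show ?thesis using w by (simp add: diagram_def)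
  qed
  have E: "(i,j) \<in> essential_set \<pi> n" using D nD1 nD2 by (simp add: essential_set_def)
  have sub: "idx ` {2..<k} \<subseteq> se \<pi> n i j"
  proof
    fix q assume "q \<in> idx ` {2..<k}"
    then obtain m where m: "2 \<le> m" "m < k" "q = idx m" by auto
    then show "q \<in> se \<pi> n i j" using cm[OF m(1,2)] ib' b'b jv va unfolding se_def by auto
  qed
  have "inj_on idx {2..<k}"
    using strict_mono_on_imp_inj_on[OF sm] by (rule inj_on_subset) auto
  then have "card (idx ` {2..<k}) = k - 2" by (simp add: card_image)
  moreover have "finite (se \<pi> n i j)" by (rule finite_subset[of _ "{..n}"]) (auto simp: se_def)
  ultimately have "card (se \<pi> n i j) \<ge> k - 2" using card_mono sub by metis
  then show ?thesis using E by blast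
qed

theorem theorem3p3:
  fixes \<pi> :: "nat \<Rightarrow> nat" and n k :: nat
  assumes "k \<ge> 3" and "schroeder \<pi> n"
  shows "avoids \<pi> n (pat21 k) \<longleftrightarrow>
    (\<forall>(i,j) \<in> essential_set \<pi> n. int i + int j \<ge> int n + 3 - int k + int (rank \<pi> i j))"
proof -
  have perm: "\<pi> permutes {1..n}" and av: "avoids \<pi> n [2,1,4,3]"
    using assms(2) by (auto simp: schroeder_def)
  have eq: "(int i + int j \<ge> int n + 3 - int k + int (rank \<pi> i j)) \<longleftrightarrow> \<not> card (se \<pi> n i j) \<ge> k - 2"
    if "(i,j) \<in> essential_set \<pi> n" for i j
  proof -
    have "(i,j) \<in> diagram \<pi> n" using that by (simp add: essential_set_def)
    from count_se[OF perm this] show ?thesis using assms(1) by linarith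
  qed
  have "avoids \<pi> n (pat21 k) \<longleftrightarrow> \<not> (\<exists>(i,j)\<in>essential_set \<pi> n. card (se \<pi> n i j) \<ge> k - 2)"
    using contains_to_ess[OF perm assms(1)] ess_to_contains[OF perm av assms(1)]
    unfolding avoids_def by blast
  also have "\<dots> \<longleftrightarrow> (\<forall>(i,j) \<in> essential_set \<pi> n. int i + int j \<ge> int n + 3 - int k + int (rank \<pi> i j))"
    using eq by blast
  finally show ?thesis .
qed

end
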